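(* For every integer $k\ge 6$, there are infinitely many (pairwise non-isomorphic) $k$-vertex-critical graphs that are simultaneously $2P_2$-free, $(K_3+P_1)$-free and $C_5$-free.
   Context: $\chi(G)$ denotes the chromatic number of $G$. A graph $G$ is $k$-vertex-critical if $\chi(G)=k$ and $\chi(G-v)<k$ for every vertex $v$ of $G$. $2P_2$ is the disjoint union of two copies of the path on two vertices; $K_3+P_1$ is the disjoint union of a triangle and an isolated vertex; $C_5$ is the 5-cycle. A graph is $H$-free if it contains no induced subgraph isomorphic to $H$. *)

theory Defs
  imports Main
begin

type_synonym 'a graph = "'a set \<times> 'a set set"

definition verts :: "'a graph \<Rightarrow> 'a set" where "verts G = fst G"
definition edges :: "'a graph \<Rightarrow> 'a set set" where "edges G = snd G"

definition fin_graph :: "'a graph \<Rightarrow> bool" where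
  "fin_graph G \<longleftrightarrow> finite (verts G) \<and>
     (\<forall>e\<in>edges G. \<exists>u v. e = {u, v} \<and> u \<noteq> v \<and> u \<in> verts G \<and> v \<in> verts G)"

definition adj :: "'a graph \<Rightarrow> 'a \<Rightarrow> 'a \<Rightarrow> bool" where
  "adj G u v \<longleftrightarrow> {u, v} \<in> edges G"

definition colourable :: "'a graph \<Rightarrow> nat \<Rightarrow> bool" where
  "colourable G k \<longleftrightarrow> (\<exists>c :: 'a \<Rightarrow> nat. (\<forall>v\<in>verts G. c v < k) \<and>
      (\<forall>u\<in>verts G. \<forall>v\<in>verts G. adj G u v \<longrightarrow> c u \<noteq> c v))"

definition chromatic_number :: "'a graph \<Rightarrow> nat" where
  "chromatic_number G = (LEAST k. colourable G k)"

definition delete_vertex :: "'a graph \<Rightarrow> 'a \<Rightarrow> 'a graph" where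
  "delete_vertex G v = (verts G - {v}, {e\<in>edges G. v \<notin> e})"

definition vertex_critical :: "nat \<Rightarrow> 'a graph \<Rightarrow> bool" where
  "vertex_critical k G \<longleftrightarrow> chromatic_number G = k \<and>
     (\<forall>v\<in>verts G. chromatic_number (delete_vertex G v) < k)"

definition graph_iso :: "'a graph \<Rightarrow> 'b graph \<Rightarrow> bool" where
  "graph_iso G H \<longleftrightarrow> (\<exists>f. bij_betw f (verts G) (verts H) \<and>
     (\<forall>u\<in>verts G. \<forall>v\<in>verts G. adj H (f u) (f v) \<longleftrightarrow> adj G u v))"

definition contains_induced :: "'a graph \<Rightarrow> 'b graph \<Rightarrow> bool" where
  "contains_induced G H \<longleftrightarrow> (\<exists>f. inj_on f (verts H) \<and> f ` verts H \<subseteq> verts G \<and>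
     (\<forall>u\<in>verts H. \<forall>v\<in>verts H. adj G (f u) (f v) \<longleftrightarrow> adj H u v))"

definition H_free :: "'b graph \<Rightarrow> 'a graph \<Rightarrow> bool" where
  "H_free H G \<longleftrightarrow> \<not> contains_induced G H"

definition two_P2 :: "nat graph" where
  "two_P2 = ({0,1,2,3}, {{0,1},{2,3}})"

definition K3_plus_P1 :: "nat graph" where
  "K3_plus_P1 = ({0,1,2,3}, {{0,1},{1,2},{0,2}})"

definition C5 :: "nat graph" where
  "C5 = ({0,1,2,3,4}, {{0,1},{1,2},{2,3},{3,4},{4,0}})"

end

theory Submission
  imports Defs
begin

definition F :: "int \<Rightarrow> int \<Rightarrow> int \<Rightarrow> int \<Rightarrow> bool" where
 "F n p a b \<longleftrightarrow> p < \<bar>a - b\<bar> \<and> \<bar>a - b\<bar> < n - p"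

lemma c5_arith: fixes n p a b c d e :: int
 assumes "n \<ge> 5*p+6" "p \<ge> 0" "0 \<le> a" "a < n" "0 \<le> b" "b < n" "0 \<le> c" "c < n" "0 \<le> d" "d < n" "0 \<le> e" "e < n"
 "a \<noteq> b" "a \<noteq> c" "a \<noteq> d" "a \<noteq> e" "b \<noteq> c" "b \<noteq> d" "b \<noteq> e" "c \<noteq> d" "c \<noteq> e" "d \<noteq> e"
 "F n p a b" "F n p b c" "F n p c d" "F n p d e" "F n p e a"
 "\<not> F n p a c" "\<not> F n p a d" "\<not> F n p b d" "\<not> F n p b e" "\<not> F n p c e"
 shows False
 using assms unfolding F_def by (smt (z3))

lemma p2_arith: fixes n p a b c d :: int
 assumes "n \<ge> 5*p+6" "p \<ge> 0" "0 \<le> a" "a < n" "0 \<le> b" "b < n" "0 \<le> c" "c < n" "0 \<le> d" "d < n"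
 "a \<noteq> b" "a \<noteq> c" "a \<noteq> d" "b \<noteq> c" "b \<noteq> d" "c \<noteq> d"
 "F n p a b" "F n p c d"
 "\<not> F n p a c" "\<not> F n p a d" "\<not> F n p b d" "\<not> F n p b c"
 shows False
 using assms unfolding F_def by (smt (z3))

lemma k3_arith: fixes n p a b c d :: int
 assumes "n \<ge> 5*p+6" "p \<ge> 0" "0 \<le> a" "a < n" "0 \<le> b" "b < n" "0 \<le> c" "c < n" "0 \<le> d" "d < n"
 "a \<noteq> b" "a \<noteq> c" "a \<noteq> d" "b \<noteq> c" "b \<noteq> d" "c \<noteq> d"
 "F n p a b" "F n p b c" "F n p a c"
 "\<not> F n p a d" "\<not> F n p b d" "\<not> F n p c d"
 shows False
 using assms unfolding F_def by (smt (z3))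

definition FN :: "nat \<Rightarrow> nat \<Rightarrow> nat \<Rightarrow> nat \<Rightarrow> bool" where
 "FN n p a b \<longleftrightarrow> F (int n) (int p) (int a) (int b)"

definition NN :: "nat \<Rightarrow> nat \<Rightarrow> nat" where "NN k p = (p+1)*(k-1)+1"

definition Gr :: "nat \<Rightarrow> nat \<Rightarrow> nat graph" where
 "Gr k p = ({..<NN k p}, {{x,y} | x y. x < NN k p \<and> y < NN k p \<and> FN (NN k p) p x y})"

lemma F_sym: "F n p a b = F n p b a"
  unfolding F_def by (simp add: abs_minus_commute)

lemma verts_Gr: "verts (Gr k p) = {..<NN k p}"
  by (simp add: Gr_def verts_def)

lemma adj_Gr: "adj (Gr k p) u v \<longleftrightarrow> u < NN k p \<and> v < NN k p \<and> FN (NN k p) p u v"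
  unfolding adj_def edges_def Gr_def
  by (auto simp: doubleton_eq_iff FN_def F_sym)

lemma NN_ge: "k \<ge> 6 \<Longrightarrow> int (NN k p) \<ge> 5 * int p + 6"
proof -
  assume "k \<ge> 6"
  then have "(p+1)*(k-1) \<ge> (p+1)*5" by (intro mult_le_mono2) simp
  moreover have "(p+1)*5 = 5*p+5" by simp
  ultimately have "NN k p \<ge> 5*p+6" unfolding NN_def by linarith
  then show ?thesis by linarith
qed

lemma fin_Gr: "fin_graph (Gr k p)"
  unfolding fin_graph_def verts_Gr
proof (intro conjI ballI)
  fix e assume "e \<in> edges (Gr k p)"
  then obtain x y where "e = {x,y}" "x < NN k p" "y < NN k p" "FN (NN k p) p x y"
    by (auto simp: Gr_def edges_def)
  then show "\<exists>u v. e = {u, v} \<and> u \<noteq> v \<and> u \<in> {..<NN k p} \<and> v \<in> {..<NN k p}"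
    by (intro exI[of _ x] exI[of _ y]) (auto simp: FN_def F_def)
qed simp

lemma C5_free: assumes "k \<ge> 6" shows "H_free C5 (Gr k p)"
proof -
  let ?G = "Gr k p" let ?n = "NN k p"
  { fix f assume inj: "inj_on f (verts C5)" and sub: "f ` verts C5 \<subseteq> verts ?G"
      and h: "\<forall>u\<in>verts C5. \<forall>v\<in>verts C5. adj ?G (f u) (f v) \<longleftrightarrow> adj C5 u v"
    have V: "verts C5 = {0,1,2,3,4}" by (simp add: C5_def verts_def)
    have lt: "f i < ?n" if "i \<in> {0,1,2,3,4}" for i using sub V that verts_Gr by auto
    have ds: "f i \<noteq> f j" if "i \<in> {0,1,2,3,4}" "j \<in> {0,1,2,3,4}" "i \<noteq> j" for i j
      using inj V that unfolding inj_on_def by metis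
    have A: "adj C5 u v \<longleftrightarrow> {u,v} \<in> {{0,1},{1,2},{2,3},{3,4},{4,0}}" for u v
      by (simp add: C5_def adj_def edges_def)
    have E: "FN ?n p (f u) (f v) \<longleftrightarrow> {u,v} \<in> {{0,1},{1,2},{2,3},{3,4},{4,0}}"
      if "u \<in> {0,1,2,3,4}" "v \<in> {0,1,2,3,4}" for u v
      using h[rule_format, of u v] that V lt adj_Gr A by auto
    have "FN ?n p (f 0) (f 1)" using E[of 0 1] by simp
    moreover have "FN ?n p (f 1) (f 2)" using E[of 1 2] by simp
    moreover have "FN ?n p (f 2) (f 3)" using E[of 2 3] by simp
    moreover have "FN ?n p (f 3) (f 4)" using E[of 3 4] by simp
    moreover have "FN ?n p (f 4) (f 0)" using E[of 4 0] by simp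
    moreover have "\<not> FN ?n p (f 0) (f 2)" using E[of 0 2] by (simp add: doubleton_eq_iff)
    moreover have "\<not> FN ?n p (f 0) (f 3)" using E[of 0 3] by (simp add: doubleton_eq_iff)
    moreover have "\<not> FN ?n p (f 1) (f 3)" using E[of 1 3] by (simp add: doubleton_eq_iff)
    moreover have "\<not> FN ?n p (f 1) (f 4)" using E[of 1 4] by (simp add: doubleton_eq_iff)
    moreover have "\<not> FN ?n p (f 2) (f 4)" using E[of 2 4] by (simp add: doubleton_eq_iff)
    ultimately have False
      using c5_arith[where n="int ?n" and p="int p" and a="int (f 0)" and b="int (f 1)" and c="int (f 2)" and d="int (f 3)" and e="int (f 4)"]
        NN_ge[OF assms, of p] lt[of 0] lt[of 1] lt[of 2] lt[of 3] lt[of 4]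
        ds[of 0 1] ds[of 0 2] ds[of 0 3] ds[of 0 4] ds[of 1 2] ds[of 1 3] ds[of 1 4] ds[of 2 3] ds[of 2 4] ds[of 3 4]
      unfolding FN_def by simp
  }
  then show ?thesis unfolding H_free_def contains_induced_def by blast
qed

lemma P2_free: assumes "k \<ge> 6" shows "H_free two_P2 (Gr k p)"
proof -
  let ?G = "Gr k p" let ?n = "NN k p"
  { fix f assume inj: "inj_on f (verts two_P2)" and sub: "f ` verts two_P2 \<subseteq> verts ?G"
      and h: "\<forall>u\<in>verts two_P2. \<forall>v\<in>verts two_P2. adj ?G (f u) (f v) \<longleftrightarrow> adj two_P2 u v"
    have V: "verts two_P2 = {0,1,2,3}" by (simp add: two_P2_def verts_def)
    have lt: "f i < ?n" if "i \<in> {0,1,2,3}" for i using sub V that verts_Gr by auto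
    have ds: "f i \<noteq> f j" if "i \<in> {0,1,2,3}" "j \<in> {0,1,2,3}" "i \<noteq> j" for i j
      using inj V that unfolding inj_on_def by metis
    have A: "adj two_P2 u v \<longleftrightarrow> {u,v} \<in> {{0,1},{2,3}}" for u v
      by (simp add: two_P2_def adj_def edges_def)
    have E: "FN ?n p (f u) (f v) \<longleftrightarrow> {u,v} \<in> {{0,1},{2,3}}"
      if "u \<in> {0,1,2,3}" "v \<in> {0,1,2,3}" for u v
      using h[rule_format, of u v] that V lt adj_Gr A by auto
    have "FN ?n p (f 0) (f 1)" using E[of 0 1] by simp
    moreover have "FN ?n p (f 2) (f 3)" using E[of 2 3] by simp
    moreover have "\<not> FN ?n p (f 0) (f 2)" using E[of 0 2] by (simp add: doubleton_eq_iff)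
    moreover have "\<not> FN ?n p (f 0) (f 3)" using E[of 0 3] by (simp add: doubleton_eq_iff)
    moreover have "\<not> FN ?n p (f 1) (f 3)" using E[of 1 3] by (simp add: doubleton_eq_iff)
    moreover have "\<not> FN ?n p (f 1) (f 2)" using E[of 1 2] by (simp add: doubleton_eq_iff)
    ultimately have False
      using p2_arith[where n="int ?n" and p="int p" and a="int (f 0)" and b="int (f 1)" and c="int (f 2)" and d="int (f 3)"]
        NN_ge[OF assms, of p] lt[of 0] lt[of 1] lt[of 2] lt[of 3]
        ds[of 0 1] ds[of 0 2] ds[of 0 3] ds[of 1 2] ds[of 1 3] ds[of 2 3]
      unfolding FN_def by simp
  }
  then show ?thesis unfolding H_free_def contains_induced_def by blast
qed

lemma K3_free: assumes "k \<ge> 6" shows "H_free K3_plus_P1 (Gr k p)"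
proof -
  let ?G = "Gr k p" let ?n = "NN k p"
  { fix f assume inj: "inj_on f (verts K3_plus_P1)" and sub: "f ` verts K3_plus_P1 \<subseteq> verts ?G"
      and h: "\<forall>u\<in>verts K3_plus_P1. \<forall>v\<in>verts K3_plus_P1. adj ?G (f u) (f v) \<longleftrightarrow> adj K3_plus_P1 u v"
    have V: "verts K3_plus_P1 = {0,1,2,3}" by (simp add: K3_plus_P1_def verts_def)
    have lt: "f i < ?n" if "i \<in> {0,1,2,3}" for i using sub V that verts_Gr by auto
    have ds: "f i \<noteq> f j" if "i \<in> {0,1,2,3}" "j \<in> {0,1,2,3}" "i \<noteq> j" for i j
      using inj V that unfolding inj_on_def by metis
    have A: "adj K3_plus_P1 u v \<longleftrightarrow> {u,v} \<in> {{0,1},{1,2},{0,2}}" for u v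
      by (simp add: K3_plus_P1_def adj_def edges_def)
    have E: "FN ?n p (f u) (f v) \<longleftrightarrow> {u,v} \<in> {{0,1},{1,2},{0,2}}"
      if "u \<in> {0,1,2,3}" "v \<in> {0,1,2,3}" for u v
      using h[rule_format, of u v] that V lt adj_Gr A by auto
    have "FN ?n p (f 0) (f 1)" using E[of 0 1] by simp
    moreover have "FN ?n p (f 1) (f 2)" using E[of 1 2] by simp
    moreover have "FN ?n p (f 0) (f 2)" using E[of 0 2] by simp
    moreover have "\<not> FN ?n p (f 0) (f 3)" using E[of 0 3] by (simp add: doubleton_eq_iff)
    moreover have "\<not> FN ?n p (f 1) (f 3)" using E[of 1 3] by (simp add: doubleton_eq_iff)
    moreover have "\<not> FN ?n p (f 2) (f 3)" using E[of 2 3] by (simp add: doubleton_eq_iff)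
    ultimately have False
      using k3_arith[where n="int ?n" and p="int p" and a="int (f 0)" and b="int (f 1)" and c="int (f 2)" and d="int (f 3)"]
        NN_ge[OF assms, of p] lt[of 0] lt[of 1] lt[of 2] lt[of 3]
        ds[of 0 1] ds[of 0 2] ds[of 0 3] ds[of 1 2] ds[of 1 3] ds[of 2 3]
      unfolding FN_def by simp
  }
  then show ?thesis unfolding H_free_def contains_induced_def by blast
qed


lemma div_close: assumes "(a::nat) div m = b div m" "0 < m" shows "int a < int b + int m"
proof -
  have "a = m*(a div m) + a mod m" by simp
  moreover have "a mod m < m" using assms(2) by simp
  moreover have "m*(b div m) \<le> b" by (metis div_mult_mod_eq le_add1 mult.commute)
  ultimately have "a < m*(a div m) + m" by linarith
  then have "a < m*(b div m) + m" using assms(1) by simp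
  then have "a < b + m" using \<open>m*(b div m) \<le> b\<close> by linarith
  then show ?thesis by linarith
qed

lemma cb_arith: fixes n p a x y gx gy :: int
  assumes "3*p+1 \<le> n" "p \<ge> 0" "0 \<le> a" "a \<le> x" "a \<le> y" "x < n" "y < n"
   "x \<noteq> y \<longrightarrow> \<not> F n p x y" "x \<noteq> a \<longrightarrow> \<not> F n p a x" "y \<noteq> a \<longrightarrow> \<not> F n p a y"
   "gx = (if x \<ge> a + n - p then x - n else x)" "gy = (if y \<ge> a + n - p then y - n else y)"
  shows "\<bar>gx - gy\<bar> \<le> p"
  using assms unfolding F_def by (smt (z3))
lemma inj_arith: fixes n p a x y gx gy :: int
  assumes "0 \<le> x" "0 \<le> y" "x < n" "y < n"
   "gx = (if x \<ge> a + n - p then x - n else x)" "gy = (if y \<ge> a + n - p then y - n else y)" "gx = gy"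
  shows "x = y"
  using assms by (smt (z3))

lemma clique_bound:
  fixes S :: "nat set" and n p :: nat
  assumes S: "S \<subseteq> {..<n}" and np: "int n \<ge> 3*int p + 1"
    and cl: "\<forall>x\<in>S. \<forall>y\<in>S. x \<noteq> y \<longrightarrow> \<not> FN n p x y"
  shows "card S \<le> p+1"
proof (cases "S = {}")
  case True then show ?thesis by simp
next
  case False
  have fin: "finite S" using S finite_subset by blast
  define a where "a = Min S"
  have aS: "a \<in> S" using fin False a_def by simp
  have amin: "\<forall>x\<in>S. a \<le> x" using fin a_def by simp
  define g where "g x = (if int x \<ge> int a + int n - int p then int x - int n else int x)" for x
  have close: "\<bar>g x - g y\<bar> \<le> int p" if "x \<in> S" "y \<in> S" for x y
  proof -
    have "x < n" "y < n" "a \<le> x" "a \<le> y" using that S amin by auto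
    moreover have "x \<noteq> y \<longrightarrow> \<not> F (int n) (int p) (int x) (int y)"
      "x \<noteq> a \<longrightarrow> \<not> F (int n) (int p) (int a) (int x)"
      "y \<noteq> a \<longrightarrow> \<not> F (int n) (int p) (int a) (int y)"
      using cl that aS unfolding FN_def by auto
    ultimately show ?thesis using np
      by (intro cb_arith[where n="int n" and p="int p" and a="int a" and x="int x" and y="int y"])
         (simp_all add: g_def)
  qed
  have inj: "inj_on g S"
  proof (rule inj_onI)
    fix x y assume "x \<in> S" "y \<in> S" "g x = g y"
    moreover have "x < n" "y < n" using \<open>x \<in> S\<close> \<open>y \<in> S\<close> S by auto
    have e: "(if int x \<ge> int a + int n - int p then int x - int n else int x) =
      (if int y \<ge> int a + int n - int p then int y - int n else int y)"
      using \<open>g x = g y\<close> unfolding g_def .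
    have "int x = int y"
      using inj_arith[where n="int n" and p="int p" and a="int a" and x="int x" and y="int y", OF _ _ _ _ refl refl e]
        \<open>x < n\<close> \<open>y < n\<close> by simp
    then show "x = y" by simp
  qed
  define T where "T = g ` S"
  have finT: "finite T" "T \<noteq> {}" using fin False T_def by auto
  define m where "m = Min T"
  have mT: "m \<in> T" using finT m_def by simp
  have "T \<subseteq> {m..m + int p}"
  proof
    fix t assume "t \<in> T"
    then have "m \<le> t" using finT m_def by simp
    moreover have "\<bar>t - m\<bar> \<le> int p" using \<open>t \<in> T\<close> mT close T_def by auto
    ultimately show "t \<in> {m..m + int p}" by auto
  qed
  then have "card T \<le> card {m..m + int p}" by (intro card_mono) auto
  also have "\<dots> = p + 1" by simp
  finally show ?thesis using card_image[OF inj] T_def by simp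
qed

lemma not_col: assumes k: "k \<ge> 6" and c: "colourable (Gr k p) j" shows "k \<le> j"
proof (rule ccontr)
  assume "\<not> k \<le> j"
  then have jk: "j \<le> k - 1" by simp
  let ?n = "NN k p"
  obtain c where c1: "\<forall>v\<in>{..<?n}. c v < j"
    and c2: "\<forall>u\<in>{..<?n}. \<forall>v\<in>{..<?n}. adj (Gr k p) u v \<longrightarrow> c u \<noteq> c v"
    using c unfolding colourable_def verts_Gr by blast
  define A where "A i = {x \<in> {..<?n}. c x = i}" for i
  have sub: "{..<?n} \<subseteq> (\<Union>i\<in>{..<j}. A i)" using c1 A_def by auto
  have cA: "card (A i) \<le> p + 1" for i
  proof (rule clique_bound)
    show "A i \<subseteq> {..<?n}" using A_def by auto
    show "int ?n \<ge> 3 * int p + 1" using NN_ge[OF k, of p] by linarith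
    show "\<forall>x\<in>A i. \<forall>y\<in>A i. x \<noteq> y \<longrightarrow> \<not> FN ?n p x y"
    proof (intro ballI impI)
      fix x y assume xy: "x \<in> A i" "y \<in> A i" "x \<noteq> y"
      then have xl: "x \<in> {..<?n}" "y \<in> {..<?n}" "c x = c y" by (auto simp: A_def)
      show "\<not> FN ?n p x y"
      proof
        assume "FN ?n p x y"
        then have "adj (Gr k p) x y" using xl adj_Gr by auto
        then show False using c2 xl by blast
      qed
    qed
  qed
  have "?n = card {..<?n}" by simp
  also have "\<dots> \<le> card (\<Union>i\<in>{..<j}. A i)" by (intro card_mono sub) (auto simp: A_def)
  also have "\<dots> \<le> (\<Sum>i\<in>{..<j}. card (A i))" by (rule card_UN_le) simp
  also have "\<dots> \<le> card {..<j} * (p+1)" using sum_bounded_above[of "{..<j}" "\<lambda>i. card (A i)" "p+1"] cA by simp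
  also have "\<dots> \<le> (k-1) * (p+1)" using jk by (simp only: card_lessThan mult_le_mono1)
  finally show False unfolding NN_def by (simp add: mult.commute)
qed

lemma col: assumes k: "k \<ge> 1" shows "colourable (Gr k p) k"
  unfolding colourable_def verts_Gr
proof (intro exI[of _ "\<lambda>x. x div (p+1)"] conjI ballI impI)
  fix v assume "v \<in> {..<NN k p}"
  then have "v \<le> (p+1)*(k-1)" unfolding NN_def by simp
  then have "v div (p+1) \<le> ((p+1)*(k-1)) div (p+1)" by (rule div_le_mono)
  moreover have "((p+1)*(k-1)) div (p+1) = k-1" by (rule nonzero_mult_div_cancel_left) simp
  ultimately show "v div (p+1) < k" using k by linarith
next
  fix u v assume "u \<in> {..<NN k p}" "v \<in> {..<NN k p}" "adj (Gr k p) u v"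
  then have F: "FN (NN k p) p u v" using adj_Gr by auto
  show "u div (p+1) \<noteq> v div (p+1)"
  proof
    assume e: "u div (p+1) = v div (p+1)"
    have "int u < int v + int (p+1)" "int v < int u + int (p+1)"
      using div_close[OF e] div_close[OF e[symmetric]] by auto
    then show False using F unfolding FN_def F_def by auto
  qed
qed

lemma del_arith: fixes n p v x y ox oy :: int
  assumes "0 \<le> v" "v < n" "0 \<le> x" "x < n" "0 \<le> y" "y < n" "x \<noteq> v" "y \<noteq> v" "p \<ge> 0"
   "ox = (if v < x then x - v - 1 else x + n - v - 1)" "oy = (if v < y then y - v - 1 else y + n - v - 1)"
   "ox < oy + (p + 1)" "oy < ox + (p+1)" "p < \<bar>x - y\<bar>" "\<bar>x - y\<bar> < n - p"
  shows False
  using assms by (smt (z3))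

lemma col_del: assumes k: "k \<ge> 6" and v: "v < NN k p"
  shows "colourable (delete_vertex (Gr k p) v) (k-1)"
proof -
  let ?n = "NN k p"
  define o' where "o' x = (if v < x then x - v - 1 else x + ?n - v - 1)" for x
  have oi: "int (o' x) = (if v < x then int x - int v - 1 else int x + int ?n - int v - 1)" for x
    using v unfolding o'_def by (cases "v < x") (auto simp: of_nat_diff)
  have V: "verts (delete_vertex (Gr k p) v) = {..<?n} - {v}"
    by (simp add: delete_vertex_def verts_def Gr_def)
  have adjd: "adj (delete_vertex (Gr k p) v) x y \<Longrightarrow> adj (Gr k p) x y" for x y
    by (simp add: adj_def delete_vertex_def edges_def)
  show ?thesis unfolding colourable_def V
  proof (intro exI[of _ "\<lambda>x. o' x div (p+1)"] conjI ballI impI)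
    fix x assume x: "x \<in> {..<?n} - {v}"
    have "x < ?n" "x \<noteq> v" using x by auto
    moreover have nM: "?n = (k-1)*(p+1) + 1" by (simp add: NN_def mult.commute)
    ultimately have "o' x < (k-1)*(p+1)" using v unfolding o'_def by (cases "v < x") arith+
    then show "o' x div (p+1) < k - 1" by (simp add: less_mult_imp_div_less)
  next
    fix x y assume x: "x \<in> {..<?n} - {v}" and y: "y \<in> {..<?n} - {v}"
      and a: "adj (delete_vertex (Gr k p) v) x y"
    then have F: "FN ?n p x y" using adj_Gr adjd by blast
    show "o' x div (p+1) \<noteq> o' y div (p+1)"
    proof
      assume e: "o' x div (p+1) = o' y div (p+1)"
      have "int (o' x) < int (o' y) + int (p+1)" "int (o' y) < int (o' x) + int (p+1)"
        using div_close[OF e] div_close[OF e[symmetric]] by auto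
      moreover have "x < ?n" "y < ?n" "x \<noteq> v" "y \<noteq> v" using x y by auto
      ultimately show False using F v unfolding FN_def F_def
        by (intro del_arith[where n="int ?n" and p="int p" and v="int v" and x="int x" and y="int y"
              and ox="int (o' x)" and oy="int (o' y)"]) (simp_all add: oi)
    qed
  qed
qed

lemma crit: assumes k: "k \<ge> 6" shows "vertex_critical k (Gr k p)"
  unfolding vertex_critical_def
proof (intro conjI ballI)
  show "chromatic_number (Gr k p) = k" unfolding chromatic_number_def
    by (rule Least_equality) (use col[of k p] k not_col[OF k] in auto)
next
  fix v assume "v \<in> verts (Gr k p)"
  then have "v < NN k p" by (simp add: verts_Gr)
  then have "chromatic_number (delete_vertex (Gr k p) v) \<le> k - 1"
    unfolding chromatic_number_def using col_del[OF k] by (intro Least_le) auto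
  then show "chromatic_number (delete_vertex (Gr k p) v) < k" using k by simp
qed

theorem theorem2p7:
  fixes k :: nat
  assumes "k \<ge> 6"
  shows "\<exists>S :: nat graph set. infinite S \<and>
    (\<forall>G\<in>S. fin_graph G \<and> vertex_critical k G \<and>
       H_free two_P2 G \<and> H_free K3_plus_P1 G \<and> H_free C5 G) \<and>
    (\<forall>G\<in>S. \<forall>H\<in>S. G \<noteq> H \<longrightarrow> \<not> graph_iso G H)"
proof (intro exI[of _ "range (Gr k)"] conjI ballI impI)
  have cardV: "card (verts (Gr k p)) = NN k p" for p by (simp add: verts_Gr)
  have NNinj: "NN k p = NN k q \<Longrightarrow> p = q" for p q
    using assms unfolding NN_def by simp
  have "inj (Gr k)"
  proof (rule injI)
    fix p q assume "Gr k p = Gr k q"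
    then have "card (verts (Gr k p)) = card (verts (Gr k q))" by simp
    then show "p = q" unfolding cardV by (rule NNinj)
  qed
  show "infinite (range (Gr k))"
  proof
    assume "finite (range (Gr k))"
    from finite_imageD[OF this \<open>inj (Gr k)\<close>] show False by simp
  qed
  fix G assume "G \<in> range (Gr k)"
  then obtain p where G: "G = Gr k p" by auto
  show "fin_graph G" using G fin_Gr by simp
  show "vertex_critical k G" using G crit[OF assms] by simp
  show "H_free two_P2 G" using G P2_free[OF assms] by simp
  show "H_free K3_plus_P1 G" using G K3_free[OF assms] by simp
  show "H_free C5 G" using G C5_free[OF assms] by simp
  fix H assume "H \<in> range (Gr k)" "G \<noteq> H"
  then obtain q where H: "H = Gr k q" by auto
  have "p \<noteq> q" using G H \<open>G \<noteq> H\<close> by blast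
  then have "NN k p \<noteq> NN k q" using NNinj by blast
  show "\<not> graph_iso G H"
  proof
    assume "graph_iso G H"
    then obtain f where "bij_betw f (verts G) (verts H)" unfolding graph_iso_def by blast
    then have "card (verts G) = card (verts H)" by (rule bij_betw_same_card)
    then show False using G H cardV \<open>NN k p \<noteq> NN k q\<close> by simp
  qed
qed

end
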